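(* For $A\in\mathbb{R}^{m\times N}$ and $K\subseteq[N]$ the following are equivalent: (i) every $x_0\in\{0,1\}^N$ with $\operatorname{supp}x_0\subseteq K$ is the unique solution of $(P_{\mathrm{bin}})$ with $b=Ax_0$; (ii) every $x_0\in[0,1]^N$ with $\operatorname{supp}x_0\subseteq K$ is the unique solution of $(P_{\mathrm{bin}})$ with $b=Ax_0$; (iii) $\ker(A)\cap N^+\cap H_K^+=\{0\}$, where $H^+_K=\{w\in\mathbb{R}^N: w_i\ge 0 \text{ for } i\in [N]\setminus K\}$ and $N^+=\{w\in\mathbb{R}^N: \sum_{i=1}^N w_i\le 0\}$.
   Context: $[N]=\{1,\dots,N\}$. $(P_{\mathrm{bin}})$ is the program $\min\|x\|_1$ subject to $Ax=b$ and $x\in[0,1]^N$; "unique solution" means unique minimizer. *)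

theory Defs
  imports "HOL-Analysis.Analysis"
begin

definition l1norm :: "real ^ 'n \<Rightarrow> real" where
  "l1norm x = (\<Sum>i\<in>UNIV. \<bar>x $ i\<bar>)"

definition feasible_bin :: "real ^ 'n ^ 'm \<Rightarrow> real ^ 'm \<Rightarrow> real ^ 'n \<Rightarrow> bool" where
  "feasible_bin A b x \<longleftrightarrow> A *v x = b \<and> (\<forall>i. 0 \<le> x $ i \<and> x $ i \<le> 1)"

definition unique_sol_Pbin :: "real ^ 'n ^ 'm \<Rightarrow> real ^ 'm \<Rightarrow> real ^ 'n \<Rightarrow> bool" where
  "unique_sol_Pbin A b x \<longleftrightarrow> feasible_bin A b x \<and>
     (\<forall>z. feasible_bin A b z \<and> z \<noteq> x \<longrightarrow> l1norm x < l1norm z)"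

definition supp_vec :: "real ^ 'n \<Rightarrow> 'n set" where
  "supp_vec x = {i. x $ i \<noteq> 0}"

definition kerA :: "real ^ 'n ^ 'm \<Rightarrow> (real ^ 'n) set" where
  "kerA A = {w. A *v w = 0}"

definition Nplus :: "(real ^ 'n) set" where
  "Nplus = {w. (\<Sum>i\<in>UNIV. w $ i) \<le> 0}"

definition HKplus :: "'n set \<Rightarrow> (real ^ 'n) set" where
  "HKplus K = {w. \<forall>i. i \<notin> K \<longrightarrow> 0 \<le> w $ i}"

end

theory Submission
  imports Defs
begin

lemma l1_nonneg: "(\<forall>i. 0 \<le> x $ i) \<Longrightarrow> l1norm x = (\<Sum>i\<in>UNIV. x $ i)"
  unfolding l1norm_def by (intro sum.cong) auto

lemma iii_ii:
  fixes A :: "real ^ 'n ^ 'm"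
  assumes H: "kerA A \<inter> Nplus \<inter> HKplus K = {0}"
    and x0: "\<forall>i. x0 $ i \<in> {0..1}" and s: "supp_vec x0 \<subseteq> K"
  shows "unique_sol_Pbin A (A *v x0) x0"
  unfolding unique_sol_Pbin_def
proof (intro conjI allI impI)
  show "feasible_bin A (A *v x0) x0" using x0 by (auto simp: feasible_bin_def)
  fix z assume zz: "feasible_bin A (A *v x0) z \<and> z \<noteq> x0"
  define w where "w = z - x0"
  have "A *v w = 0" using zz by (simp add: w_def feasible_bin_def matrix_vector_mult_diff_distrib)
  moreover have "w \<in> HKplus K"
  proof -
    { fix i assume "i \<notin> K"
      then have "x0 $ i = 0" using s by (auto simp: supp_vec_def)
      then have "0 \<le> w $ i" using zz by (auto simp: w_def feasible_bin_def) }
    then show ?thesis by (auto simp: HKplus_def)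
  qed
  moreover have "w \<noteq> 0" using zz by (simp add: w_def)
  ultimately have "w \<notin> Nplus" using H by (auto simp: kerA_def)
  then have "0 < (\<Sum>i\<in>UNIV. w $ i)" by (auto simp: Nplus_def)
  then have "(\<Sum>i\<in>UNIV. x0 $ i) < (\<Sum>i\<in>UNIV. z $ i)"
    by (simp add: w_def sum_subtractf)
  moreover have "l1norm x0 = (\<Sum>i\<in>UNIV. x0 $ i)" using x0 by (intro l1_nonneg) auto
  moreover have "l1norm z = (\<Sum>i\<in>UNIV. z $ i)" using zz by (intro l1_nonneg) (auto simp: feasible_bin_def)
  ultimately show "l1norm x0 < l1norm z" by simp
qed

lemma i_iii:
  fixes A :: "real ^ 'n ^ 'm"
  assumes I: "\<forall>x0. (\<forall>i. x0 $ i \<in> {0, 1}) \<and> supp_vec x0 \<subseteq> K \<longrightarrow> unique_sol_Pbin A (A *v x0) x0"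
  shows "kerA A \<inter> Nplus \<inter> HKplus K = {0}"
proof (rule ccontr)
  assume "kerA A \<inter> Nplus \<inter> HKplus K \<noteq> {0}"
  moreover have "0 \<in> kerA A \<inter> Nplus \<inter> HKplus K" by (auto simp: kerA_def Nplus_def HKplus_def)
  ultimately obtain w where w: "w \<in> kerA A \<inter> Nplus \<inter> HKplus K" "w \<noteq> 0" by blast
  define t where "t = 1 / (1 + l1norm w)"
  have l1: "0 \<le> l1norm w" unfolding l1norm_def by (simp add: sum_nonneg)
  have tpos: "0 < t" using l1 by (simp add: t_def)
  have wb: "\<bar>w $ i\<bar> \<le> l1norm w" for i
    unfolding l1norm_def by (rule member_le_sum) auto
  have tw: "t * \<bar>w $ i\<bar> \<le> 1" for i
  proof -
    have "t * \<bar>w $ i\<bar> \<le> t * (1 + l1norm w)" using wb[of i] tpos by (intro mult_left_mono) auto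
    also have "\<dots> = 1" using l1 by (simp add: t_def)
    finally show ?thesis .
  qed
  define x0 :: "real ^ 'n" where "x0 = (\<chi> i. if i \<in> K \<and> w $ i < 0 then 1 else 0)"
  have xb: "\<forall>i. x0 $ i \<in> {0, 1}" by (simp add: x0_def)
  have xs: "supp_vec x0 \<subseteq> K" by (auto simp: x0_def supp_vec_def split: if_splits)
  have U: "unique_sol_Pbin A (A *v x0) x0" using I xb xs by blast
  define z where "z = x0 + t *\<^sub>R w"
  have Aw: "A *v w = 0" using w by (simp add: kerA_def)
  have zc: "0 \<le> z $ i \<and> z $ i \<le> 1" for i
  proof -
    have a: "t * \<bar>w $ i\<bar> \<le> 1" by (rule tw)
    have b: "i \<notin> K \<longrightarrow> 0 \<le> w $ i" using w by (auto simp: HKplus_def)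
    show ?thesis using a b tpos
      by (cases "w $ i < 0") (auto simp: z_def x0_def abs_if mult_nonneg_nonneg mult_pos_neg mult_pos_neg less_imp_le)
  qed
  have zf: "feasible_bin A (A *v x0) z"
    using zc by (simp add: feasible_bin_def z_def matrix_vector_right_distrib matrix_vector_mult_scaleR Aw)
  have zne: "z \<noteq> x0" using w tpos by (simp add: z_def)
  have "l1norm x0 < l1norm z" using U zf zne by (auto simp: unique_sol_Pbin_def)
  moreover have "l1norm x0 = (\<Sum>i\<in>UNIV. x0 $ i)" by (intro l1_nonneg) (simp add: x0_def)
  moreover have "l1norm z = (\<Sum>i\<in>UNIV. z $ i)" using zc by (intro l1_nonneg) auto
  moreover have "(\<Sum>i\<in>UNIV. z $ i) = (\<Sum>i\<in>UNIV. x0 $ i) + t * (\<Sum>i\<in>UNIV. w $ i)"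
    by (simp add: z_def sum.distrib sum_distrib_left)
  moreover have "(\<Sum>i\<in>UNIV. w $ i) \<le> 0" using w by (auto simp: Nplus_def)
  ultimately show False using tpos by (smt (verit) mult_nonneg_nonpos)
qed

theorem theorem2p6:
  fixes A :: "real ^ 'n ^ 'm" and K :: "'n set"
  shows "((\<forall>x0. (\<forall>i. x0 $ i \<in> {0, 1}) \<and> supp_vec x0 \<subseteq> K \<longrightarrow> unique_sol_Pbin A (A *v x0) x0)
          \<longleftrightarrow> (\<forall>x0. (\<forall>i. x0 $ i \<in> {0..1}) \<and> supp_vec x0 \<subseteq> K \<longrightarrow> unique_sol_Pbin A (A *v x0) x0))
       \<and> ((\<forall>x0. (\<forall>i. x0 $ i \<in> {0..1}) \<and> supp_vec x0 \<subseteq> K \<longrightarrow> unique_sol_Pbin A (A *v x0) x0)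
          \<longleftrightarrow> kerA A \<inter> Nplus \<inter> HKplus K = {0})"
proof -
  have bin: "(\<forall>i. x0 $ i \<in> {0, 1}) \<Longrightarrow> (\<forall>i. x0 $ i \<in> {0..(1::real)})" for x0 :: "real ^ 'n"
    by (metis atLeastAtMost_iff insert_iff singletonD order_refl zero_le_one)
  have 1: "(\<forall>x0. (\<forall>i. x0 $ i \<in> {0..1}) \<and> supp_vec x0 \<subseteq> K \<longrightarrow> unique_sol_Pbin A (A *v x0) x0)
      \<Longrightarrow> (\<forall>x0. (\<forall>i. x0 $ i \<in> {0, 1}) \<and> supp_vec x0 \<subseteq> K \<longrightarrow> unique_sol_Pbin A (A *v x0) x0)"
    using bin by blast
  show ?thesis using 1 i_iii[of K A] iii_ii[of A K] by blast
qed

end
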